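(* Let $\mathbb{F}$ be a field of odd characteristic that is algebraic over its prime subfield. Then the following are equivalent: (1) $\mathbb{F}=\mathbb{F}_5$; (2) $\operatorname{Aut}(\mathbb{F})\subsetneq SD(\mathbb{F})$; (4) a square root of $-1$ in $\mathbb{F}$ generates the multiplicative group $\mathbb{F}^\times$. Moreover, if $\mathbb{F}$ is finite, these are also equivalent to: (3) the map $\mathbb{F}\to\mathbb{F}$ which fixes every square in $\mathbb{F}$ and sends every non-square $w$ to $-w$ is an SD-map.
   Context: A map $f:\mathbb{F}\to\widetilde{\mathbb{F}}$ between fields is called an SD-map if for all $x\neq y$ in $\mathbb{F}$ one has $f(x)\neq f(y)$ and \[ f\left(\frac{x+y}{x-y}\right)=\frac{f(x)+f(y)}{f(x)-f(y)}. \] For a field $\mathbb{F}$, $SD(\mathbb{F})$ denotes the set of surjective SD-maps $\mathbb{F}\to\mathbb{F}$, and $\operatorname{Aut}(\mathbb{F})$ its group of field automorphisms; $\operatorname{Aut}(\mathbb{F})\subseteq SD(\mathbb{F})$ always. *)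

theory Defs
  imports "HOL-Computational_Algebra.Polynomial"
begin

definition SD_map :: "('a::field \<Rightarrow> 'b::field) \<Rightarrow> bool" where
  "SD_map f \<longleftrightarrow> (\<forall>x y. x \<noteq> y \<longrightarrow>
      f x \<noteq> f y \<and> f ((x + y) / (x - y)) = (f x + f y) / (f x - f y))"

definition SD :: "('a::field \<Rightarrow> 'a) set" where
  "SD = {f. SD_map f \<and> surj f}"

definition field_aut :: "('a::field \<Rightarrow> 'a) \<Rightarrow> bool" where
  "field_aut f \<longleftrightarrow> bij f \<and> f 1 = 1 \<and>
     (\<forall>x y. f (x + y) = f x + f y) \<and> (\<forall>x y. f (x * y) = f x * f y)"

definition Aut :: "('a::field \<Rightarrow> 'a) set" where
  "Aut = {f. field_aut f}"

text \<open>The prime subfield (in positive characteristic) is the image of the naturals.\<close>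
definition prime_subfield :: "'a::field set" where
  "prime_subfield = {x. \<exists>a b::int. b \<noteq> 0 \<and> of_int b \<noteq> (0::'a) \<and> x = of_int a / of_int b}"

definition algebraic_over_prime_subfield :: "'a::field \<Rightarrow> bool" where
  "algebraic_over_prime_subfield x \<longleftrightarrow>
     (\<exists>p. p \<noteq> 0 \<and> (\<forall>i. coeff p i \<in> prime_subfield) \<and> poly p x = 0)"

definition is_square :: "'a::field \<Rightarrow> bool" where
  "is_square w \<longleftrightarrow> (\<exists>y. w = y ^ 2)"

definition generates_units :: "'a::field \<Rightarrow> bool" where
  "generates_units g \<longleftrightarrow> (\<forall>x. x \<noteq> 0 \<longrightarrow> (\<exists>k::nat. x = g ^ k))"

end

theory Submission
  imports Defs "HOL-Number_Theory.Residues"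
begin


lemma sd_inj: "SD_map f \<Longrightarrow> x \<noteq> y \<Longrightarrow> f x \<noteq> f y"
  unfolding SD_map_def by blast

lemma sd_eq: "SD_map f \<Longrightarrow> x \<noteq> y \<Longrightarrow> f ((x + y) / (x - y)) = (f x + f y) / (f x - f y)"
  unfolding SD_map_def by blast

lemma sd_f0:
  fixes f :: "'a::field \<Rightarrow> 'a"
  assumes sd: "SD_map f" and two: "(2::'a) \<noteq> 0"
  shows "f 0 = 0"
proof (rule ccontr)
  assume c: "f 0 \<noteq> 0"
  have m1: "(-1::'a) \<noteq> 1" using two by (metis add_eq_0_iff equation_minus_iff one_add_one)
  have n1: "(1::'a) \<noteq> 0" "(-1::'a) \<noteq> 0" by auto
  have e1: "f 1 = (f 1 + f 0) / (f 1 - f 0)" using sd_eq[OF sd, of 1 0] by simp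
  have e2: "f 1 = (f (-1) + f 0) / (f (-1) - f 0)" using sd_eq[OF sd, of "-1" 0] by simp
  have d1: "f 1 - f 0 \<noteq> 0" using sd_inj[OF sd, of 1 0] by simp
  have d2: "f (-1) - f 0 \<noteq> 0" using sd_inj[OF sd, of "-1" 0] by simp
  have d3: "f (-1) \<noteq> f 1" using sd_inj[OF sd, of "-1" 1] m1 by simp
  from e1 e2 have "(f 1 + f 0) / (f 1 - f 0) = (f (-1) + f 0) / (f (-1) - f 0)" by simp
  hence "(f 1 + f 0) * (f (-1) - f 0) = (f (-1) + f 0) * (f 1 - f 0)"
    using d1 d2 by (simp add: frac_eq_eq)
  hence "2 * f 0 * (f (-1) - f 1) = 0" by (simp add: algebra_simps)
  thus False using two c d3 by simp
qed

lemma sd_f1: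
  fixes f :: "'a::field \<Rightarrow> 'a"
  assumes sd: "SD_map f" and two: "(2::'a) \<noteq> 0"
  shows "f 1 = 1"
proof -
  have "f 1 = (f 1 + f 0) / (f 1 - f 0)" using sd_eq[OF sd, of 1 0] by simp
  moreover have "f 1 \<noteq> 0" using sd_inj[OF sd, of 1 0] sd_f0[OF sd two] by simp
  ultimately show ?thesis using sd_f0[OF sd two] by simp
qed

lemma sd_odd:
  fixes f :: "'a::field \<Rightarrow> 'a"
  assumes sd: "SD_map f" and two: "(2::'a) \<noteq> 0"
  shows "f (-x) = - f x"
proof (cases "x = 0")
  case True thus ?thesis using sd_f0[OF sd two] by simp
next
  case False
  have ne: "x \<noteq> -x" using False two by (metis add.inverse_inverse add_eq_0_iff mult_2 neg_equal_zero no_zero_divisors)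
  have "f ((x + -x) / (x - -x)) = (f x + f (-x)) / (f x - f (-x))" using sd_eq[OF sd ne] .
  hence "(f x + f (-x)) / (f x - f (-x)) = 0" using sd_f0[OF sd two] by simp
  moreover have "f x - f (-x) \<noteq> 0" using sd_inj[OF sd ne] by simp
  ultimately show ?thesis by (simp add: add_eq_0_iff)
qed

lemma sd_div:
  fixes f :: "'a::field \<Rightarrow> 'a"
  assumes sd: "SD_map f" and two: "(2::'a) \<noteq> 0" and y: "y \<noteq> 0"
  shows "f (x / y) = f x / f y"
proof (cases "x = y")
  case True
  have "f y \<noteq> 0" using sd_inj[OF sd y] sd_f0[OF sd two] by simp
  thus ?thesis using True y sd_f1[OF sd two] by simp
next
  case False
  have f0: "f 0 = 0" and f1: "f 1 = 1" using sd_f0[OF sd two] sd_f1[OF sd two] by auto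
  have fy: "f y \<noteq> 0" using sd_inj[OF sd y] f0 by simp
  have q1: "x / y \<noteq> 1" using False y by simp
  have fq: "f x / f y \<noteq> 1" using sd_inj[OF sd False] fy by simp
  have fq1: "f (x/y) \<noteq> 1" using sd_inj[OF sd q1] f1 by simp
  have "(x + y) / (x - y) = (x/y + 1) / (x/y - 1)" using y False by (simp add: field_simps)
  hence "(f (x/y) + 1) / (f (x/y) - 1) = (f x + f y) / (f x - f y)"
    using sd_eq[OF sd False] sd_eq[OF sd q1] f1 by simp
  also have "\<dots> = ((f x + f y) / f y) / ((f x - f y) / f y)" using fy by simp
  also have "\<dots> = (f x / f y + 1) / (f x / f y - 1)" using fy by (simp add: add_divide_distrib diff_divide_distrib)
  finally have E: "(f (x/y) + 1) / (f (x/y) - 1) = (f x / f y + 1) / (f x / f y - 1)" .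
  have "(f (x/y) + 1) * (f x / f y - 1) = (f x / f y + 1) * (f (x/y) - 1)"
    using E fq fq1 by (simp add: field_simps)
  hence "2 * (f (x/y) - f x / f y) = 0" by (simp add: algebra_simps)
  thus ?thesis using two by (metis mult_eq_0_iff right_minus_eq)
qed

lemma sd_mult:
  fixes f :: "'a::field \<Rightarrow> 'a"
  assumes sd: "SD_map f" and two: "(2::'a) \<noteq> 0"
  shows "f (x * y) = f x * f y"
proof (cases "y = 0")
  case True thus ?thesis using sd_f0[OF sd two] by simp
next
  case False
  have "f (1 / y) = 1 / f y" using sd_div[OF sd two False, of 1] sd_f1[OF sd two] by simp
  moreover have "x * y = x / (1/y)" using False by simp
  ultimately show ?thesis using sd_div[OF sd two, of "1/y" x] False by simp
qed

lemma sd_rel: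
  fixes f :: "'a::field \<Rightarrow> 'a"
  assumes sd: "SD_map f" and two: "(2::'a) \<noteq> 0"
  shows "f (x + y) * (f x - f y) = f (x - y) * (f x + f y)"
proof (cases "x = y")
  case True thus ?thesis using sd_f0[OF sd two] by simp
next
  case False
  have d: "x - y \<noteq> 0" using False by simp
  have fd: "f (x - y) \<noteq> 0" using sd_inj[OF sd d] sd_f0[OF sd two] by simp
  have fd2: "f x - f y \<noteq> 0" using sd_inj[OF sd False] by simp
  have "f (x + y) / f (x - y) = (f x + f y) / (f x - f y)"
    using sd_eq[OF sd False] sd_div[OF sd two d] by simp
  thus ?thesis using fd fd2 by (simp add: field_simps)
qed

lemma alg_two:
  fixes a b c :: "'a::field"
  assumes two: "(2::'a) \<noteq> 0" and a0: "a \<noteq> 0" and a1: "a \<noteq> 1" and am1: "a \<noteq> -1"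
    and ai: "a^2 \<noteq> -1" and ba: "b \<noteq> a"
    and e1: "b * (a - 1) = a + 1" and e2: "c * (a^2 - 1) = b * (a^2 + 1)"
    and e3: "b * (c - 1) = a * (c + 1)"
  shows "a = 2"
proof -
  have s1: "a - 1 \<noteq> 0" "a + 1 \<noteq> 0" using a1 am1 eq_neg_iff_add_eq_0 by auto
  have s3: "a^2 + 1 \<noteq> 0" using ai eq_neg_iff_add_eq_0 by auto
  have "c * (a - 1) * (a + 1) * (a - 1) = c * (a^2 - 1) * (a - 1)" by (simp add: power2_eq_square algebra_simps)
  also have "\<dots> = b * (a - 1) * (a^2 + 1)" using e2 by simp
  also have "\<dots> = (a + 1) * (a^2 + 1)" using e1 by simp
  finally have "(a + 1) * (c * (a - 1)^2) = (a + 1) * (a^2 + 1)" by (simp add: power2_eq_square algebra_simps)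
  hence c1: "c * (a - 1)^2 = a^2 + 1" using s1 by simp
  have "c * (b * (a - 1) - a * (a - 1)) = (a - 1) * (b * (c - 1)) - (a - 1) * (a * (c + 1)) + a * (a - 1) + b * (a - 1)"
    by (simp add: algebra_simps)
  also have "\<dots> = a * (a - 1) + b * (a - 1)" using e3 by simp
  finally have "c * (b * (a - 1) - a * (a - 1)) = a * (a - 1) + b * (a - 1)" .
  hence c2: "c * (1 + 2*a - a^2) = a^2 + 1" unfolding e1 by (simp add: algebra_simps power2_eq_square)
  have c0: "c \<noteq> 0" using c1 s3 by auto
  have "c * (2 * a * (2 - a)) = c * (1 + 2*a - a^2) - c * (a - 1)^2" by (simp add: algebra_simps power2_eq_square)
  also have "\<dots> = 0" using c1 c2 by simp
  finally have "c * (2 * a * (2 - a)) = 0" .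
  hence "2 - a = 0" using c0 two a0 by simp
  thus ?thesis by simp
qed
lemma sd_f2:
  fixes f :: "'a::field \<Rightarrow> 'a"
  assumes sd: "SD_map f" and two: "(2::'a) \<noteq> 0"
  shows "f 2 = 2 \<or> (f 2)^2 = -1"
proof -
  note R = sd_rel[OF sd two, of _ 1]
  note M = sd_mult[OF sd two]
  have f1: "f 1 = 1" using sd_f1[OF sd two] .
  have fm1: "f (-1) = -1" using sd_odd[OF sd two, of 1] f1 by simp
  have t21: "(2::'a) \<noteq> 1"
  proof
    assume h: "(2::'a) = 1"
    have "(1::'a) = 2 - 1" by simp
    also have "\<dots> = 0" using h by simp
    finally show False by simp
  qed
  have t32: "(3::'a) \<noteq> 2"
  proof
    assume h: "(3::'a) = 2"
    have "(1::'a) = 3 - 2" by simp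
    also have "\<dots> = 0" using h by simp
    finally show False by simp
  qed
  define a where "a = f 2"
  define b where "b = f 3"
  define c where "c = f 5"
  have f4: "f 4 = a^2" using M[of 2 2] by (simp add: a_def power2_eq_square)
  have f6: "f 6 = a * b" using M[of 2 3] by (simp add: a_def b_def)
  have e1: "b * (a - 1) = a + 1" using R[of 2] f1 by (simp add: a_def b_def)
  have e2: "c * (a^2 - 1) = b * (a^2 + 1)" using R[of 4] f1 f4 by (simp add: b_def c_def)
  have e3': "a * b * (c - 1) = a^2 * (c + 1)" using R[of 5] f1 f4 f6 by (simp add: c_def)
  show ?thesis
  proof (cases "a^2 = -1")
    case True thus ?thesis by (simp add: a_def)
  next
    case ai: False
    have a0: "a \<noteq> 0" using sd_inj[OF sd two] sd_f0[OF sd two] by (simp add: a_def)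
    have a1: "a \<noteq> 1" using sd_inj[OF sd t21] f1 by (simp add: a_def)
    have ba: "b \<noteq> a" using sd_inj[OF sd t32] by (simp add: a_def b_def)
    have e3: "b * (c - 1) = a * (c + 1)" using e3' a0 by (simp add: power2_eq_square mult.assoc)
    show ?thesis
    proof (cases "a = -1")
      case True
      hence "(2::'a) = -1" using sd_inj[OF sd, of 2 "-1"] fm1 by (auto simp: a_def)
      thus ?thesis using True by (simp add: a_def)
    next
      case False
      thus ?thesis using alg_two[OF two a0 a1 False ai ba e1 e2 e3] by (simp add: a_def)
    qed
  qed
qed
lemma alg_L:
  fixes X U V W a :: "'a::field"
  assumes two: "(2::'a) \<noteq> 0" and X0: "X \<noteq> 0" and Xp: "X + 1 \<noteq> 0" and Xm: "X - 1 \<noteq> 0"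
    and Xi: "X^2 + 1 \<noteq> 0" and V0: "V \<noteq> 0" and a0: "a \<noteq> 0"
    and E1: "U * (X - 1) = V * (X + 1)"
    and E2: "W * (X^2 - 1) = U * V * (X^2 + 1)"
    and E: "W * (U^2 - V^2) = a * X * (U^2 + V^2)"
  shows "2 * V^2 = a * (X - 1)^2" "2 * U^2 = a * (X + 1)^2"
proof -
  have sq: "((X-1)*U)^2 = ((X+1)*V)^2" using E1 by (simp add: mult.commute)
  hence sq': "(X-1)^2*U^2 = (X+1)^2*V^2" by (simp add: power_mult_distrib)
  have h1: "(X-1)^2*(U^2-V^2) = 4*X*V^2"
  proof -
    have "(X-1)^2*(U^2-V^2) = (X-1)^2*U^2 - (X-1)^2*V^2" by (simp add: algebra_simps)
    also have "\<dots> = (X+1)^2*V^2 - (X-1)^2*V^2" using sq' by simp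
    also have "\<dots> = 4*X*V^2" by (simp add: algebra_simps power2_eq_square)
    finally show ?thesis .
  qed
  have h2: "(X-1)^2*(U^2+V^2) = 2*(X^2+1)*V^2"
  proof -
    have "(X-1)^2*(U^2+V^2) = (X-1)^2*U^2 + (X-1)^2*V^2" by (simp add: algebra_simps)
    also have "\<dots> = (X+1)^2*V^2 + (X-1)^2*V^2" using sq' by simp
    also have "\<dots> = 2*(X^2+1)*V^2" by (simp add: algebra_simps power2_eq_square)
    finally show ?thesis .
  qed
  have h3: "(X-1)*(U*V) = (X+1)*V^2"
  proof -
    have "(X-1)*(U*V) = V*(U*(X-1))" by (simp add: algebra_simps)
    also have "\<dots> = V*(V*(X+1))" using E1 by simp
    finally show ?thesis by (simp add: algebra_simps power2_eq_square)
  qed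
  have L1: "W * (X^2 - 1) * (X-1)^3 * (U^2-V^2) = (X+1)*V^2*(X^2+1)*(4*X*V^2)"
  proof -
    have "W * (X^2 - 1) * (X-1)^3 * (U^2-V^2) = ((X-1)*(U*V)) * (X^2+1) * ((X-1)^2*(U^2-V^2))"
      using E2 by (simp add: algebra_simps power2_eq_square power3_eq_cube)
    also have "\<dots> = (X+1)*V^2*(X^2+1)*(4*X*V^2)" using h1 h3 by simp
    finally show ?thesis .
  qed
  have L2: "W * (X^2 - 1) * (X-1)^3 * (U^2-V^2) = (X^2-1)*(X-1)*(a*X)*(2*(X^2+1)*V^2)"
  proof -
    have "W * (X^2 - 1) * (X-1)^3 * (U^2-V^2) = (X^2-1)*(X-1)*(W*(U^2-V^2))*(X-1)^2"
      by (simp add: algebra_simps power2_eq_square power3_eq_cube)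
    also have "\<dots> = (X^2-1)*(X-1)*(a*X)*((X-1)^2*(U^2+V^2))" using E by (simp add: algebra_simps)
    also have "\<dots> = (X^2-1)*(X-1)*(a*X)*(2*(X^2+1)*V^2)" using h2 by simp
    finally show ?thesis .
  qed
  have key: "(2*X*V^2*(X^2+1)*(X+1)) * (2*V^2 - a*(X-1)^2) = 0"
  proof -
    have "(2*X*V^2*(X^2+1)*(X+1)) * (2*V^2 - a*(X-1)^2)
        = (X+1)*V^2*(X^2+1)*(4*X*V^2) - (X^2-1)*(X-1)*(a*X)*(2*(X^2+1)*V^2)"
      by (simp add: algebra_simps power2_eq_square)
    also have "\<dots> = 0" using trans[OF sym[OF L1] L2] by (simp only: diff_self)
    finally show ?thesis .
  qed
  have nz: "2*X*V^2*(X^2+1)*(X+1) \<noteq> 0" using two X0 V0 Xi Xp by simp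
  from key nz show A: "2 * V^2 = a * (X - 1)^2" by simp
  have "(X-1)^2 * (2*U^2) = (X-1)^2 * (a*(X+1)^2)"
  proof -
    have "(X-1)^2 * (2*U^2) = 2*((X+1)^2*V^2)" using sq' by (simp add: algebra_simps)
    also have "\<dots> = (X+1)^2*(2*V^2)" by (simp add: algebra_simps)
    also have "\<dots> = (X-1)^2 * (a*(X+1)^2)" using A by (simp add: algebra_simps)
    finally show ?thesis .
  qed
  thus "2 * U^2 = a * (X + 1)^2" using Xm by simp
qed
lemma sd_sq:
  fixes f :: "'a::field \<Rightarrow> 'a"
  assumes sd: "SD_map f" and two: "(2::'a) \<noteq> 0"
  shows "f (x^2) = (f x)^2"
  using sd_mult[OF sd two, of x x] by (simp add: power2_eq_square)

lemma sd_L: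
  fixes f :: "'a::field \<Rightarrow> 'a"
  assumes sd: "SD_map f" and two: "(2::'a) \<noteq> 0"
    and x0: "x \<noteq> 0" and x1: "x^2 \<noteq> 1" and xi: "x^2 \<noteq> -1"
  shows "2 * (f (x - 1))^2 = f 2 * (f x - 1)^2" "2 * (f (x + 1))^2 = f 2 * (f x + 1)^2"
    "f (x + 1) * (f x - 1) = f (x - 1) * (f x + 1)"
proof -
  note R = sd_rel[OF sd two]
  note M = sd_mult[OF sd two]
  note S = sd_sq[OF sd two]
  have f0: "f 0 = 0" using sd_f0[OF sd two] .
  have f1: "f 1 = 1" using sd_f1[OF sd two] .
  have fm1: "f (-1) = -1" using sd_odd[OF sd two, of 1] f1 by simp
  define X where "X = f x"
  define U where "U = f (x + 1)"
  define V where "V = f (x - 1)"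
  define W where "W = f (x^2 + 1)"
  define a where "a = f 2"
  have X0: "X \<noteq> 0" using sd_inj[OF sd x0] f0 by (simp add: X_def)
  have xp: "x \<noteq> -1" using x1 by auto
  have xm: "x \<noteq> 1" using x1 by auto
  have Xp: "X + 1 \<noteq> 0"
  proof
    assume "X + 1 = 0" hence "X = -1" by (simp add: eq_neg_iff_add_eq_0)
    hence "f x = f (-1)" using fm1 by (simp add: X_def)
    thus False using sd_inj[OF sd xp] by simp
  qed
  have Xm: "X - 1 \<noteq> 0" using sd_inj[OF sd xm] f1 by (simp add: X_def)
  have Xi: "X^2 + 1 \<noteq> 0"
  proof
    assume "X^2 + 1 = 0" hence "X^2 = -1" by (simp add: eq_neg_iff_add_eq_0)
    hence "f (x^2) = f (-1)" using fm1 S by (simp add: X_def)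
    thus False using sd_inj[OF sd xi] by simp
  qed
  have V0: "V \<noteq> 0"
  proof
    assume "V = 0" hence "f (x - 1) = f 0" using f0 by (simp add: V_def)
    thus False using sd_inj[OF sd, of "x-1" 0] xm by simp
  qed
  have a0: "a \<noteq> 0" using sd_inj[OF sd two] f0 by (simp add: a_def)
  have E1: "U * (X - 1) = V * (X + 1)" using R[of x 1] f1 by (simp add: U_def V_def X_def)
  have fx21: "f (x^2 - 1) = U * V"
  proof -
    have "x^2 - 1 = (x + 1) * (x - 1)" by (simp add: algebra_simps power2_eq_square)
    thus ?thesis using M[of "x+1" "x-1"] by (simp add: U_def V_def)
  qed
  have E2: "W * (X^2 - 1) = U * V * (X^2 + 1)" using R[of "x^2" 1] f1 S[of x] fx21 by (simp add: W_def X_def)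
  have e1: "(x+1)^2 + (x-1)^2 = 2 * (x^2 + 1)" by (simp add: algebra_simps power2_eq_square)
  have e2: "(x+1)^2 - (x-1)^2 = 2 * (2 * x)" by (simp add: algebra_simps power2_eq_square)
  have "f ((x+1)^2 + (x-1)^2) * (f ((x+1)^2) - f ((x-1)^2)) = f ((x+1)^2 - (x-1)^2) * (f ((x+1)^2) + f ((x-1)^2))"
    using R .
  hence "(a * W) * (U^2 - V^2) = (a * (a * X)) * (U^2 + V^2)"
    unfolding e1 e2 M S by (simp add: a_def W_def U_def V_def X_def)
  hence E: "W * (U^2 - V^2) = a * X * (U^2 + V^2)" using a0 by (simp add: mult.assoc)
  note r = alg_L[OF two X0 Xp Xm Xi V0 a0 E1 E2 E]
  show "2 * (f (x - 1))^2 = f 2 * (f x - 1)^2" using r(1) by (simp add: V_def a_def X_def)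
  show "2 * (f (x + 1))^2 = f 2 * (f x + 1)^2" using r(2) by (simp add: U_def a_def X_def)
  show "f (x + 1) * (f x - 1) = f (x - 1) * (f x + 1)" using E1 by (simp add: U_def V_def X_def)
qed
lemma alg_C:
  fixes X Y a :: "'a::field"
  assumes two: "(2::'a) \<noteq> 0" and X0: "X \<noteq> 0" and X1: "X^2 \<noteq> 1" and Xi: "X^2 \<noteq> -1"
    and ha: "a = 2 \<or> (a^2 = -1 \<and> (5::'a) = 0)"
    and E1: "2 * Y^2 = a * (X + 1)^2" and E2: "2 * X^2 = a * (Y - 1)^2"
  shows "a = 2 \<and> Y = X + 1"
proof (cases "a = 2")
  case True
  have "Y^2 = (X+1)^2" using E1 True two by simp
  hence y: "Y = X + 1 \<or> Y = -(X+1)" by (simp add: power2_eq_iff)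
  have "X^2 = (Y-1)^2" using E2 True two by simp
  hence x: "X = Y - 1 \<or> X = -(Y-1)" by (simp add: power2_eq_iff)
  show ?thesis
  proof (cases "Y = X + 1")
    case True thus ?thesis using \<open>a = 2\<close> by simp
  next
    case False
    hence yy: "Y = -(X+1)" using y by simp
    show ?thesis
    proof (cases "X = Y - 1")
      case True
      hence "2 * (X + 1) = 0" using yy by (simp add: algebra_simps)
      hence "X + 1 = 0" using two mult_eq_0_iff by blast
      hence "X = -1" by (simp add: eq_neg_iff_add_eq_0)
      thus ?thesis using X1 by simp
    next
      case False
      hence "X = X + 2" using x yy by (simp add: algebra_simps)
      thus ?thesis using two by simp
    qed
  qed
next
  case False
  hence a2: "a^2 = -1" and f5: "(5::'a) = 0" using ha by auto
  have "(a - 2) * (a + 2) = a^2 - 4" by (simp add: algebra_simps power2_eq_square)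
  also have "\<dots> = -1 - 4" using a2 by simp
  also have "\<dots> = - 5" by simp
  also have "\<dots> = 0" using f5 by simp
  finally have "a = -2" using False by (simp add: eq_neg_iff_add_eq_0)
  hence "2 * (Y^2 + (X+1)^2) = 0" "2 * (X^2 + (Y-1)^2) = 0" using E1 E2
    by (auto simp: algebra_simps)
  hence E1': "Y^2 + (X+1)^2 = 0" and E2': "X^2 + (Y-1)^2 = 0" using two mult_eq_0_iff by blast+
  have "2 * (X + Y) = 0"
  proof -
    have "2 * (X + Y) = (Y^2 + (X+1)^2) - (X^2 + (Y-1)^2)" by (simp add: algebra_simps power2_eq_square)
    thus ?thesis using E1' E2' by simp
  qed
  hence "X + Y = 0" using two mult_eq_0_iff by blast
  hence yx: "Y = -X" by (simp add: eq_neg_iff_add_eq_0 add.commute)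
  have "2 * ((X + 2) * (X - 1)) = (X^2 + (X+1)^2) - 5" by (simp add: algebra_simps power2_eq_square)
  also have "\<dots> = 0" using E1' yx f5 by simp
  finally have "(X + 2) * (X - 1) = 0" using two mult_eq_0_iff by blast
  hence "X = -2 \<or> X = 1" by (simp add: eq_neg_iff_add_eq_0)
  moreover have "(-2::'a)^2 = -1" using f5 by (simp add: power2_eq_square eq_neg_iff_add_eq_0)
  ultimately show ?thesis using X1 Xi by auto
qed
definition good :: "'a::field \<Rightarrow> bool" where
  "good x \<longleftrightarrow> x \<noteq> 0 \<and> x^2 \<noteq> 1 \<and> x^2 \<noteq> -1"

lemma good_f:
  fixes f :: "'a::field \<Rightarrow> 'a"
  assumes sd: "SD_map f" and two: "(2::'a) \<noteq> 0" and g: "good x"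
  shows "f x \<noteq> 0" "(f x)^2 \<noteq> 1" "(f x)^2 \<noteq> -1"
proof -
  have f0: "f 0 = 0" using sd_f0[OF sd two] .
  have f1: "f 1 = 1" using sd_f1[OF sd two] .
  have fm1: "f (-1) = -1" using sd_odd[OF sd two, of 1] f1 by simp
  have S: "f (x^2) = (f x)^2" using sd_sq[OF sd two] .
  show "f x \<noteq> 0" using sd_inj[OF sd, of x 0] g f0 by (auto simp: good_def)
  show "(f x)^2 \<noteq> 1" using sd_inj[OF sd, of "x^2" 1] g f1 S by (auto simp: good_def)
  show "(f x)^2 \<noteq> -1" using sd_inj[OF sd, of "x^2" "-1"] g fm1 S by (auto simp: good_def)
qed

lemma sd_C:
  fixes f :: "'a::field \<Rightarrow> 'a"
  assumes sd: "SD_map f" and two: "(2::'a) \<noteq> 0" and g: "good x" and g1: "good (x + 1)"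
    and ha: "f 2 = 2 \<or> ((f 2)^2 = -1 \<and> (5::'a) = 0)"
  shows "f 2 = 2 \<and> f (x + 1) = f x + 1"
proof -
  have E1: "2 * (f (x + 1))^2 = f 2 * (f x + 1)^2"
    using sd_L(2)[OF sd two] g by (auto simp: good_def)
  have E2: "2 * (f x)^2 = f 2 * (f (x + 1) - 1)^2"
    using sd_L(1)[OF sd two, of "x+1"] g1 by (auto simp: good_def)
  show ?thesis using alg_C[OF two good_f[OF sd two g] ha E1 E2] .
qed

lemma alg_bad:
  fixes x :: "'a::field"
  assumes two: "(2::'a) \<noteq> 0" and g: "good x" and n1: "\<not> good (x + 1)" and n2: "\<not> good (x - 1)"
  shows False
proof -
  have x0: "x \<noteq> 0" and x1: "x^2 \<noteq> 1" and xi: "x^2 \<noteq> -1" using g by (auto simp: good_def)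
  have "x + 1 \<noteq> 0"
  proof
    assume "x + 1 = 0" hence "x = -1" by (simp add: eq_neg_iff_add_eq_0)
    thus False using x1 by simp
  qed
  hence A: "(x+1)^2 = 1 \<or> (x+1)^2 = -1" using n1 by (auto simp: good_def)
  have "x - 1 \<noteq> 0" using x1 by auto
  hence B: "(x-1)^2 = 1 \<or> (x-1)^2 = -1" using n2 by (auto simp: good_def)
  have d: "(x+1)^2 - (x-1)^2 = 2 * (2 * x)" by (simp add: algebra_simps power2_eq_square)
  have s: "(x+1)^2 + (x-1)^2 = 2 * (x^2 + 1)" by (simp add: algebra_simps power2_eq_square)
  have nd: "2 * (2 * x) \<noteq> 0" using two x0 by (metis mult_eq_0_iff)
  have "x^2 + 1 \<noteq> 0" using xi by (simp add: eq_neg_iff_add_eq_0)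
  hence ns: "2 * (x^2 + 1) \<noteq> 0" using two by (metis mult_eq_0_iff)
  from A B show False
  proof (elim disjE)
    assume "(x+1)^2 = 1" "(x-1)^2 = 1" thus False using d nd by simp
  next
    assume "(x+1)^2 = 1" "(x-1)^2 = -1" thus False using s ns by simp
  next
    assume "(x+1)^2 = -1" "(x-1)^2 = 1" thus False using s ns by simp
  next
    assume "(x+1)^2 = -1" "(x-1)^2 = -1" thus False using d nd by simp
  qed
qed

lemma sd_good_P:
  fixes f :: "'a::field \<Rightarrow> 'a"
  assumes sd: "SD_map f" and two: "(2::'a) \<noteq> 0" and a2: "f 2 = 2" and g: "good x"
  shows "f (x + 1) = f x + 1"
proof -
  have ha: "f 2 = 2 \<or> ((f 2)^2 = -1 \<and> (5::'a) = 0)" using a2 by simp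
  note gf = good_f[OF sd two g]
  have Xp: "f x + 1 \<noteq> 0"
  proof
    assume "f x + 1 = 0" hence "f x = -1" by (simp add: eq_neg_iff_add_eq_0)
    thus False using gf(2) by simp
  qed
  have Xm: "f x - 1 \<noteq> 0" using gf(2) by auto
  have "2 * (f (x + 1))^2 = 2 * (f x + 1)^2"
    using sd_L(2)[OF sd two] g a2 by (auto simp: good_def)
  hence "(f (x + 1))^2 = (f x + 1)^2" using two by simp
  hence U: "f (x + 1) = f x + 1 \<or> f (x + 1) = -(f x + 1)" by (simp add: power2_eq_iff)
  show ?thesis
  proof (rule ccontr)
    assume nP: "f (x + 1) \<noteq> f x + 1"
    hence U': "f (x + 1) = -(f x + 1)" using U by simp
    have E: "f (x + 1) * (f x - 1) = f (x - 1) * (f x + 1)"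
      using sd_L(3)[OF sd two] g by (auto simp: good_def)
    have "f (x - 1) * (f x + 1) = f (x + 1) * (f x - 1)" using E by simp
    also have "\<dots> = (-(f x + 1)) * (f x - 1)" using U' by (simp only:)
    also have "\<dots> = (-(f x - 1)) * (f x + 1)" by (simp add: algebra_simps)
    finally have V': "f (x - 1) = -(f x - 1)" using Xp by (metis mult_right_cancel)
    show False
    proof (cases "good (x + 1)")
      case True
      hence "f (x + 1) = f x + 1" using sd_C[OF sd two g True ha] by simp
      thus False using nP by simp
    next
      case n1: False
      show False
      proof (cases "good (x - 1)")
        case True
        have "f (x - 1 + 1) = f (x - 1) + 1" using sd_C[OF sd two True _ ha] g by simp
        hence "f x = -(f x - 1) + 1" using V' by simp
        hence "2 * (f x - 1) = 0" by (simp add: algebra_simps)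
        thus False using two Xm by simp
      next
        case False
        thus False using alg_bad[OF two g n1] by simp
      qed
    qed
  qed
qed

lemma sd_P:
  fixes f :: "'a::field \<Rightarrow> 'a"
  assumes sd: "SD_map f" and two: "(2::'a) \<noteq> 0" and a2: "f 2 = 2"
  shows "f (x + 1) = f x + 1"
proof -
  have f0: "f 0 = 0" using sd_f0[OF sd two] .
  have f1: "f 1 = 1" using sd_f1[OF sd two] .
  have fm1: "f (-1) = -1" using sd_odd[OF sd two, of 1] f1 by simp
  have fm2: "f (-2) = -2" using sd_odd[OF sd two, of 2] a2 by simp
  show ?thesis
  proof (cases "good x")
    case True thus ?thesis using sd_good_P[OF sd two a2] by simp
  next
    case False
    hence "x = 0 \<or> x = 1 \<or> x = -1 \<or> x^2 = -1" by (auto simp: good_def power2_eq_1_iff)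
    moreover
    { assume xi: "x^2 = -1"
      have ?thesis
      proof (cases "good (x + 1)")
        case True
        have P1: "f (x + 1 + 1) = f (x + 1) + 1" using sd_good_P[OF sd two a2 True] .
        have R: "f (x + 1 + 1) * (f (x + 1) - 1) = f (x + 1 - 1) * (f (x + 1) + 1)"
          using sd_rel[OF sd two, of "x+1" 1] f1 by simp
        have nz: "f (x + 1) + 1 \<noteq> 0"
        proof
          assume "f (x + 1) + 1 = 0" hence "f (x + 1) = -1" by (simp add: eq_neg_iff_add_eq_0)
          thus False using good_f(2)[OF sd two True] by simp
        qed
        have "(f (x + 1) + 1) * (f (x + 1) - 1) = (f (x + 1) + 1) * f x" using R P1 by (simp add: mult.commute)
        hence "f (x + 1) - 1 = f x" using nz by simp
        thus ?thesis by (metis diff_add_cancel)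
      next
        case False
        have "x + 1 \<noteq> 0"
        proof
          assume "x + 1 = 0" hence "x = -1" by (simp add: eq_neg_iff_add_eq_0)
          hence "(1::'a) = -1" using xi by simp
          thus False using two by (metis one_add_one add_eq_0_iff equation_minus_iff)
        qed
        hence "(x + 1)^2 = 1 \<or> (x + 1)^2 = -1" using False by (auto simp: good_def)
        moreover have "(x + 1)^2 = 2 * x"
        proof -
          have "(x + 1)^2 = x^2 + 2 * x + 1" by (simp add: power2_eq_square algebra_simps)
          thus ?thesis using xi by simp
        qed
        ultimately have "2 * x = 1 \<or> 2 * x = -1" by simp
        moreover have five: "(5::'a) = 0"
        proof -
          from \<open>2 * x = 1 \<or> 2 * x = -1\<close> have "(2 * x)^2 = 1" by (metis power2_eq_1_iff)
          hence "4 * x^2 = 1" by (simp add: power_mult_distrib)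
          hence "(-4::'a) = 1" using xi by simp
          hence "(-4::'a) - 1 = 0" by simp
          thus ?thesis by (simp add: eq_neg_iff_add_eq_0)
        qed
        ultimately have "x = -2 \<or> x = 2"
        proof -
          { assume "2 * x = 1"
            hence "2 * (x + 2) = 5" by (simp add: algebra_simps)
            hence "2 * (x + 2) = 0" using five by simp
            hence "x + 2 = 0" using two mult_eq_0_iff by blast
            hence "x = -2" by (simp add: eq_neg_iff_add_eq_0) }
          moreover
          { assume "2 * x = -1"
            hence "2 * (x - 2) = -5" by (simp add: algebra_simps)
            hence "2 * (x - 2) = 0" using five by simp
            hence "x - 2 = 0" using two mult_eq_0_iff by blast
            hence "x = 2" by simp }
          ultimately show ?thesis using \<open>2 * x = 1 \<or> 2 * x = -1\<close> by blast
        qed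
        moreover have t3: "(3::'a) = -2" using five by (simp add: eq_neg_iff_add_eq_0)
        have f3: "f 3 = 3" by (subst (1 2) t3) (rule fm2)
        ultimately show ?thesis using fm1 fm2 a2 f3 by auto
      qed }
    ultimately show ?thesis using f0 f1 fm1 a2 by auto
  qed
qed

lemma five_good:
  fixes x :: "'a::field"
  assumes five: "(5::'a) = 0" and two: "(2::'a) \<noteq> 0" and x: "x \<notin> {0, 1, -1, 2, -2}"
  shows "good x"
proof -
  have "x^2 \<noteq> 1" using x by (auto simp: power2_eq_1_iff)
  moreover have "x^2 \<noteq> -1"
  proof
    assume xi: "x^2 = -1"
    have "(x - 2) * (x + 2) = x^2 - 4" by (simp add: algebra_simps power2_eq_square)
    also have "\<dots> = - 5" using xi by simp
    also have "\<dots> = 0" using five by simp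
    finally have "x = 2 \<or> x = -2" by (simp add: eq_neg_iff_add_eq_0)
    thus False using x by auto
  qed
  ultimately show ?thesis using x by (auto simp: good_def)
qed

lemma five_good1:
  fixes x :: "'a::field"
  assumes five: "(5::'a) = 0" and two: "(2::'a) \<noteq> 0" and x: "x \<notin> {0, 1, -1, 2, -2}"
  shows "good (x + 1)"
proof -
  have t: "(-3::'a) = 2" using five by (simp add: eq_neg_iff_add_eq_0)
  have "x + 1 \<notin> {0, 1, -1, 2, -2}"
  proof
    assume "x + 1 \<in> {0, 1, -1, 2, -2}"
    hence "x = -1 \<or> x = 0 \<or> x = -2 \<or> x = 1 \<or> x = -3"
      by (auto simp: eq_neg_iff_add_eq_0 algebra_simps)
    thus False using x t by auto
  qed
  thus ?thesis using five_good[OF five two] by blast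
qed

lemma sd_core:
  fixes f :: "'a::field \<Rightarrow> 'a"
  assumes sd: "SD_map f" and two: "(2::'a) \<noteq> 0"
  shows "(\<forall>x y. f (x + y) = f x + f y) \<or> ((5::'a) = 0 \<and> (\<forall>x::'a. x \<in> {0, 1, -1, 2, -2}))"
proof (cases "f 2 = 2")
  case True
  have "f (x + y) = f x + f y" for x y
  proof (cases "y = 0")
    case True thus ?thesis using sd_f0[OF sd two] by simp
  next
    case False
    have fy: "f y \<noteq> 0" using sd_inj[OF sd False] sd_f0[OF sd two] by simp
    have "x + y = (x / y + 1) * y" using False by (simp add: field_simps)
    hence "f (x + y) = f (x / y + 1) * f y" using sd_mult[OF sd two] by simp
    also have "\<dots> = (f x / f y + 1) * f y" using sd_P[OF sd two True] sd_div[OF sd two False] by simp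
    also have "\<dots> = f x + f y" using fy by (simp add: field_simps)
    finally show ?thesis .
  qed
  thus ?thesis by blast
next
  case False
  hence a2: "(f 2)^2 = -1" using sd_f2[OF sd two] by simp
  have f1: "f 1 = 1" using sd_f1[OF sd two] .
  have fm1: "f (-1) = -1" using sd_odd[OF sd two, of 1] f1 by simp
  have "f 4 = f (-1)" using sd_sq[OF sd two, of 2] a2 fm1 by simp
  hence "(4::'a) = -1" using sd_inj[OF sd] by blast
  hence five: "(5::'a) = 0" by (simp add: eq_neg_iff_add_eq_0)
  have "x \<in> {0, 1, -1, 2, -2}" for x :: 'a
  proof (rule ccontr)
    assume x: "x \<notin> {0, 1, -1, 2, -2}"
    have "f 2 = 2" using sd_C[OF sd two five_good[OF five two x] five_good1[OF five two x]] a2 five by simp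
    thus False using False by simp
  qed
  thus ?thesis using five by blast
qed

lemma f5_pow4:
  fixes x :: "'a::field"
  assumes five: "(5::'a) = 0" and all: "\<forall>z::'a. z \<in> {0, 1, -1, 2, -2}" and x0: "x \<noteq> 0"
  shows "x^4 = 1"
proof -
  have "(16::'a) = 1 + 3 * 5" by simp
  hence s: "(16::'a) = 1" using five by simp
  have "x \<in> {1, -1, 2, -2}" using all x0 by auto
  thus ?thesis using s by auto
qed

lemma f5_cube_inj:
  fixes x y :: "'a::field"
  assumes five: "(5::'a) = 0" and all: "\<forall>z::'a. z \<in> {0, 1, -1, 2, -2}" and e: "x^3 = y^3"
  shows "x = y"
proof (cases "x = 0 \<or> y = 0")
  case True thus ?thesis using e by auto
next
  case False
  hence x0: "x \<noteq> 0" and y0: "y \<noteq> 0" by auto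
  have "x * y^3 = x * x^3" using e by simp
  also have "\<dots> = x^4" by (simp add: power_Suc[symmetric] del: power_Suc)
  also have "\<dots> = 1" using f5_pow4[OF five all x0] .
  also have "\<dots> = y^4" using f5_pow4[OF five all y0] by simp
  also have "\<dots> = y * y^3" by (simp add: power_Suc[symmetric] del: power_Suc)
  finally show ?thesis using y0 by simp
qed

lemma f5_SD:
  fixes dummy :: "'a::field"
  assumes five: "(5::'a) = 0" and all: "\<forall>z::'a. z \<in> {0, 1, -1, 2, -2}"
  shows "SD_map (\<lambda>x::'a. x^3)"
  unfolding SD_map_def
proof (intro allI impI conjI)
  fix x y :: 'a assume xy: "x \<noteq> y"
  show ne: "x^3 \<noteq> y^3" using f5_cube_inj[OF five all] xy by blast
  have d1: "(x - y)^3 \<noteq> 0" using xy by simp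
  have d2: "x^3 - y^3 \<noteq> 0" using ne by simp
  have id: "(x+y)^3 * (x^3 - y^3) - (x^3 + y^3) * (x - y)^3 = 6 * x * y * (x^4 - y^4)"
    by (simp add: algebra_simps power2_eq_square power3_eq_cube power4_eq_xxxx)
  have "x * y * (x^4 - y^4) = 0"
  proof (cases "x = 0 \<or> y = 0")
    case True thus ?thesis by auto
  next
    case False thus ?thesis using f5_pow4[OF five all, of x] f5_pow4[OF five all, of y] by auto
  qed
  hence "(x+y)^3 * (x^3 - y^3) - (x^3 + y^3) * (x - y)^3 = 0" using id by (metis mult.assoc mult_zero_right)
  hence "(x+y)^3 * (x^3 - y^3) = (x^3 + y^3) * (x - y)^3" by (metis right_minus_eq)
  thus "((x + y) / (x - y))^3 = (x^3 + y^3) / (x^3 - y^3)"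
    using d1 d2 by (simp add: power_divide frac_eq_eq)
qed

lemma five_two: "(5::'a::field) = 0 \<Longrightarrow> (2::'a) \<noteq> 0"
proof
  assume f: "(5::'a) = 0" and t: "(2::'a) = 0"
  have "(1::'a) = 5 - 2 * 2" by simp
  also have "\<dots> = 0" using f t by simp
  finally show False by simp
qed

lemma card5_imp:
  assumes c: "card (UNIV :: 'a::field set) = 5"
  shows "(5::'a) = 0 \<and> (\<forall>x::'a. x \<in> {0, 1, -1, 2, -2})"
proof -
  have "CHAR('a) dvd 5" using CHAR_dvd_CARD[where 'a='a] c by simp
  hence le: "CHAR('a) \<le> 5" using dvd_imp_le[of "CHAR('a)" 5] by simp
  have "CHAR('a) \<noteq> 1" by simp
  have "CHAR('a) \<noteq> 0" using \<open>CHAR('a) dvd 5\<close> by (metis dvd_0_left_iff zero_neq_numeral)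
  have nn: "\<And>n::nat. n \<le> 5 \<Longrightarrow> n = 0 \<or> n = 1 \<or> n = 2 \<or> n = 3 \<or> n = 4 \<or> n = 5" by arith
  have "CHAR('a) \<in> {0,1,2,3,4,5}" using nn[OF le] by auto
  hence ch: "CHAR('a) = 5" using \<open>CHAR('a) dvd 5\<close> \<open>CHAR('a) \<noteq> 1\<close> \<open>CHAR('a) \<noteq> 0\<close> by auto
  have five: "(5::'a) = 0" using of_nat_CHAR[where 'a='a] ch by simp
  have two: "(2::'a) \<noteq> 0" using five_two[OF five] .
  have t3: "(3::'a) \<noteq> 0"
  proof
    assume h: "(3::'a) = 0"
    have "(2::'a) = 5 - 3" by simp
    also have "\<dots> = 0" using five h by simp
    finally show False using two by simp
  qed
  have t4: "(4::'a) \<noteq> 0"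
  proof
    assume h: "(4::'a) = 0"
    have "(1::'a) = 5 - 4" by simp
    also have "\<dots> = 0" using five h by simp
    finally show False by simp
  qed
  have dist: "card {0, 1, -1, 2, -2 :: 'a} = 5"
  proof -
    have a: "(1::'a) \<noteq> -1" using two by (metis add_eq_0_iff one_add_one)
    have b: "(2::'a) \<noteq> -2" using t4 by (metis add_eq_0_iff numeral_Bit0 one_plus_numeral numeral_One)
    have c1: "(1::'a) \<noteq> 2" using two by (metis add_cancel_left_right one_add_one zero_neq_one)
    have c2: "(1::'a) \<noteq> -2" using t3 by (metis add_eq_0_iff numeral_plus_one semiring_norm(5))
    have c3: "(-1::'a) \<noteq> 2" using t3 by (metis add_eq_0_iff add.commute numeral_plus_one semiring_norm(5))
    have c4: "(-1::'a) \<noteq> -2" using c1 by simp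
    show ?thesis using a b c1 c2 c3 c4 two by simp
  qed
  have fin: "finite (UNIV :: 'a set)" using c by (metis card.infinite zero_neq_numeral)
  have "{0, 1, -1, 2, -2 :: 'a} = UNIV"
    using card_subset_eq[OF fin, of "{0, 1, -1, 2, -2}"] dist c by simp
  thus ?thesis using five by blast
qed

lemma card5_of:
  assumes five: "(5::'a::field) = 0" and all: "\<forall>x::'a. x \<in> {0, 1, -1, 2, -2}"
  shows "card (UNIV :: 'a set) = 5"
proof -
  have two: "(2::'a) \<noteq> 0" using five_two[OF five] .
  have t3: "(3::'a) \<noteq> 0"
  proof
    assume h: "(3::'a) = 0"
    have "(2::'a) = 5 - 3" by simp
    also have "\<dots> = 0" using five h by simp
    finally show False using two by simp
  qed
  have t4: "(4::'a) \<noteq> 0"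
  proof
    assume h: "(4::'a) = 0"
    have "(1::'a) = 5 - 4" by simp
    also have "\<dots> = 0" using five h by simp
    finally show False by simp
  qed
  have a: "(1::'a) \<noteq> -1" using two by (metis add_eq_0_iff one_add_one)
  have b: "(2::'a) \<noteq> -2" using t4 by (metis add_eq_0_iff numeral_Bit0 one_plus_numeral numeral_One)
  have c1: "(1::'a) \<noteq> 2" using two by (metis add_cancel_left_right one_add_one zero_neq_one)
  have c2: "(1::'a) \<noteq> -2" using t3 by (metis add_eq_0_iff numeral_plus_one semiring_norm(5))
  have c3: "(-1::'a) \<noteq> 2" using t3 by (metis add_eq_0_iff add.commute numeral_plus_one semiring_norm(5))
  have c4: "(-1::'a) \<noteq> -2" using c1 by simp
  have cs: "card {0, 1, -1, 2, -2 :: 'a} = 5" using a b c1 c2 c3 c4 two by simp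
  have "UNIV = {0, 1, -1, 2, -2 :: 'a}" using all by blast
  thus ?thesis using cs by (simp only:)
qed

lemma aut_SD:
  fixes f :: "'a::field \<Rightarrow> 'a"
  assumes "field_aut f"
  shows "SD_map f \<and> surj f"
proof -
  have b: "bij f" and f1: "f 1 = 1" and add: "\<And>x y. f (x + y) = f x + f y" and mul: "\<And>x y. f (x * y) = f x * f y"
    using assms by (auto simp: field_aut_def)
  have f0: "f 0 = 0" using add[of 0 0] by (metis add.right_neutral add_left_cancel)
  have sub: "f (x - y) = f x - f y" for x y using add[of "x - y" y] by (simp add: eq_diff_eq)
  have inv: "f (inverse y) = inverse (f y)" for y
  proof (cases "y = 0")
    case True thus ?thesis using f0 by simp
  next
    case False
    have "f y * f (inverse y) = 1" using mul[of y "inverse y"] False f1 by simp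
    thus ?thesis by (metis inverse_unique)
  qed
  have dv: "f (x / y) = f x / f y" for x y using mul[of x "inverse y"] inv by (simp add: divide_inverse)
  have inj: "inj f" using b bij_is_inj by blast
  show ?thesis unfolding SD_map_def
    using inj b bij_is_surj by (auto simp: dv add sub inj_eq)
qed

lemma SD_aut:
  fixes f :: "'a::field \<Rightarrow> 'a"
  assumes sd: "SD_map f" and s: "surj f" and two: "(2::'a) \<noteq> 0" and add: "\<forall>x y. f (x + y) = f x + f y"
  shows "field_aut f"
proof -
  have "inj f" using sd_inj[OF sd] by (meson injI)
  hence "bij f" using s by (simp add: bij_def)
  thus ?thesis unfolding field_aut_def using sd_f1[OF sd two] sd_mult[OF sd two] add by blast
qed

lemma f5_surj:
  assumes five: "(5::'a::field) = 0" and all: "\<forall>x::'a. x \<in> {0, 1, -1, 2, -2}"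
  shows "surj (\<lambda>x::'a. x^3)"
proof -
  have "(y^3)^3 = y" for y :: 'a
  proof (cases "y = 0")
    case True thus ?thesis by simp
  next
    case False
    have "(y^3)^3 = y^(1 + 4*2)" by (simp add: power_mult[symmetric])
    also have "\<dots> = y * (y^4)^2" by (simp only: power_add power_mult power_one_right)
    finally have "(y^3)^3 = y * (y^4)^2" .
    thus ?thesis using f5_pow4[OF five all False] by simp
  qed
  thus ?thesis by (metis surj_def)
qed

lemma f5_not_aut:
  assumes five: "(5::'a::field) = 0"
  shows "\<not> field_aut (\<lambda>x::'a. x^3)"
proof
  assume "field_aut (\<lambda>x::'a. x^3)"
  hence A: "\<forall>x y. (x + y)^3 = x^3 + (y::'a)^3" by (simp add: field_aut_def)
  have "(1 + 1::'a)^3 = 1^3 + 1^3" using A by blast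
  hence h: "(8::'a) = 2" by simp
  have "(1::'a) = 8 - 2 - 5" by simp
  also have "\<dots> = 0" using h five by simp
  finally show False by simp
qed

lemma f5_sq_map:
  assumes five: "(5::'a::field) = 0" and all: "\<forall>x::'a. x \<in> {0, 1, -1, 2, -2}"
  shows "(\<lambda>w::'a. if is_square w then w else - w) = (\<lambda>x. x^3)"
proof
  fix w :: 'a
  show "(if is_square w then w else - w) = w^3"
  proof (cases "is_square w")
    case True
    then obtain y where y: "w = y^2" by (auto simp: is_square_def)
    show ?thesis
    proof (cases "y = 0")
      case True thus ?thesis using y \<open>is_square w\<close> by simp
    next
      case False
      have "w^3 = y^(2 + 4)" using y by (simp add: power_mult[symmetric])
      also have "\<dots> = y^2 * y^4" by (simp only: power_add)
      finally have "w^3 = y^2 * y^4" .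
      thus ?thesis using f5_pow4[OF five all False] y \<open>is_square w\<close> by simp
    qed
  next
    case False
    have m1: "(-1::'a) = 2^2"
    proof -
      have "(2::'a)^2 = 4" by simp
      also have "(4::'a) = 5 - 1" by simp
      finally show ?thesis using five by simp
    qed
    have "w \<noteq> 0" "w \<noteq> 1" "w \<noteq> -1" using False m1 unfolding is_square_def
      by (metis power_zero_numeral, metis power_one, metis)
    hence "w = 2 \<or> w = -2" using all by blast
    moreover have "(2::'a)^3 = -2"
    proof -
      have "(2::'a)^3 = 8" by simp
      also have "(8::'a) = 10 - 2" by simp
      also have "(10::'a) = 2 * 5" by simp
      finally show ?thesis using five by simp
    qed
    ultimately show ?thesis using False by auto
  qed
qed

lemma i_pow:
  fixes i :: "'a::field"
  assumes i: "i^2 = -1"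
  shows "i^k \<in> {1, i, -1, -i}"
proof (induction k)
  case 0 thus ?case by simp
next
  case (Suc k)
  have ii: "i * i = -1" using i by (simp add: power2_eq_square)
  from Suc show ?case using ii by (auto simp: ii)
qed

lemma part4_fwd:
  fixes i :: "'a::field"
  assumes two: "(2::'a) \<noteq> 0" and i: "i^2 = -1" and g: "generates_units i"
  shows "card (UNIV :: 'a set) = 5"
proof -
  have "x \<in> {0, 1, -1, i, -i}" for x
  proof (cases "x = 0")
    case False
    then obtain k where "x = i^k" using g by (auto simp: generates_units_def)
    thus ?thesis using i_pow[OF i, of k] by auto
  qed simp
  hence U: "UNIV = {0, 1, -1, i, -i}" by blast
  have m: "(1::'a) \<noteq> -1" using two by (metis add_eq_0_iff one_add_one)
  have i0: "i \<noteq> 0" using i m by auto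
  have i1: "i \<noteq> 1" "i \<noteq> -1" using i m by auto
  have ii: "i \<noteq> -i" using two i0 by (metis add_eq_0_iff mult_2 no_zero_divisors)
  have d: "(-1::'a) \<noteq> i" "-1 \<noteq> -i" "0 \<noteq> -i" "1 \<noteq> -i" "1 \<noteq> i" "0 \<noteq> i"
    using i0 i1 by (auto, metis minus_minus)
  have "card {0, 1, -1, i, -i} = 5" using m d ii
    by (simp del: neg_equal_iff_equal)
  thus ?thesis using U by (simp only:)
qed

lemma part4_bwd:
  assumes c: "card (UNIV :: 'a::field set) = 5"
  shows "\<exists>i::'a. i^2 = -1 \<and> generates_units i"
proof -
  have five: "(5::'a) = 0" and all: "\<forall>x::'a. x \<in> {0, 1, -1, 2, -2}" using card5_imp[OF c] by auto
  have m1: "(2::'a)^2 = -1"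
  proof -
    have "(2::'a)^2 = 4" by simp
    also have "(4::'a) = 5 - 1" by simp
    finally show ?thesis using five by simp
  qed
  have c3: "(2::'a)^3 = -2"
  proof -
    have "(2::'a)^3 = 8" by simp
    also have "(8::'a) = 10 - 2" by simp
    also have "(10::'a) = 2 * 5" by simp
    finally show ?thesis using five by simp
  qed
  have "generates_units (2::'a)" unfolding generates_units_def
  proof (intro allI impI)
    fix x :: 'a assume "x \<noteq> 0"
    hence "x = 2^0 \<or> x = 2^1 \<or> x = 2^2 \<or> x = 2^3" using all m1 c3 by auto
    thus "\<exists>k. x = 2^k" by blast
  qed
  thus ?thesis using m1 by blast
qed

lemma nonsq_exists:
  assumes fin: "finite (UNIV :: 'a::field set)" and two: "(2::'a) \<noteq> 0"
  shows "\<exists>t::'a. \<not> is_square t"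
proof (rule ccontr)
  assume "\<not> (\<exists>t::'a. \<not> is_square t)"
  hence "surj (\<lambda>y::'a. y^2)" by (auto simp: is_square_def surj_def)
  hence "inj (\<lambda>y::'a. y^2)" using finite_UNIV_surj_inj[OF fin] by blast
  hence "(1::'a) = -1" by (metis (mono_tags, lifting) injD power2_minus)
  thus False using two by (metis add_eq_0_iff one_add_one)
qed

lemma part3_fwd:
  assumes fin: "finite (UNIV :: 'a::field set)" and two: "(2::'a) \<noteq> 0"
    and sd: "SD_map (\<lambda>w::'a. if is_square w then w else - w)"
  shows "card (UNIV :: 'a set) = 5"
proof -
  let ?g = "\<lambda>w::'a. if is_square w then w else - w"
  from sd_core[OF sd two] show ?thesis
  proof
    assume add: "\<forall>x y. ?g (x + y) = ?g x + ?g y"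
    obtain t :: 'a where t: "\<not> is_square t" using nonsq_exists[OF fin two] by blast
    have s1: "is_square (1::'a)" by (auto simp: is_square_def intro: exI[of _ 1])
    have t0: "t \<noteq> 0" using t by (auto simp: is_square_def)
    have e: "?g (t + 1) = - t + 1" using add s1 t by auto
    show ?thesis
    proof (cases "is_square (t + 1)")
      case True
      hence "t + 1 = - t + 1" using e by simp
      hence "2 * t = 0" by (simp add: algebra_simps mult_2)
      thus ?thesis using two t0 by simp
    next
      case False
      hence "-(t + 1) = - t + 1" using e by simp
      hence "(2::'a) = 0" by (simp add: algebra_simps)
      thus ?thesis using two by simp
    qed
  next
    assume "(5::'a) = 0 \<and> (\<forall>x::'a. x \<in> {0, 1, -1, 2, -2})"
    thus ?thesis using card5_of by blast
  qed
qed

lemma two_of_odd: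
  assumes "odd CHAR('a::field)"
  shows "(2::'a) \<noteq> 0"
proof
  assume "(2::'a) = 0"
  hence "of_nat 2 = (0::'a)" by simp
  hence d: "CHAR('a) dvd 2" by (simp only: of_nat_eq_0_iff_char_dvd)
  hence "CHAR('a) \<le> 2" using dvd_imp_le[of "CHAR('a)" 2] by simp
  moreover have "CHAR('a) \<noteq> 0" using d by (metis dvd_0_left_iff zero_neq_numeral)
  moreover have "CHAR('a) \<noteq> 1" by simp
  ultimately have "CHAR('a) = 2" by arith
  thus False using assms by simp
qed


theorem corollary4p1:
  assumes odd_char: "odd CHAR('a::field)"
    and alg: "\<forall>x::'a. algebraic_over_prime_subfield x"
  shows "(card (UNIV :: 'a set) = 5 \<longleftrightarrow> (Aut :: ('a \<Rightarrow> 'a) set) \<subset> SD)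
       \<and> (card (UNIV :: 'a set) = 5 \<longleftrightarrow> (\<exists>i::'a. i ^ 2 = -1 \<and> generates_units i))
       \<and> (finite (UNIV :: 'a set) \<longrightarrow>
            (card (UNIV :: 'a set) = 5 \<longleftrightarrow> SD_map (\<lambda>w::'a. if is_square w then w else - w)))"
proof (intro conjI impI)
  have two: "(2::'a) \<noteq> 0" using two_of_odd[OF odd_char] .
  have sub: "(Aut :: ('a \<Rightarrow> 'a) set) \<subseteq> SD" using aut_SD by (auto simp: Aut_def SD_def)
  show "card (UNIV :: 'a set) = 5 \<longleftrightarrow> (Aut :: ('a \<Rightarrow> 'a) set) \<subset> SD"
  proof
    assume c: "card (UNIV :: 'a set) = 5"
    have five: "(5::'a) = 0" and all: "\<forall>x::'a. x \<in> {0, 1, -1, 2, -2}" using card5_imp[OF c] by auto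
    have "(\<lambda>x::'a. x^3) \<in> SD" using f5_SD[OF five all] f5_surj[OF five all] by (simp add: SD_def)
    moreover have "(\<lambda>x::'a. x^3) \<notin> Aut" using f5_not_aut[OF five] by (simp add: Aut_def)
    ultimately show "(Aut :: ('a \<Rightarrow> 'a) set) \<subset> SD" using sub by blast
  next
    assume "(Aut :: ('a \<Rightarrow> 'a) set) \<subset> SD"
    then obtain f :: "'a \<Rightarrow> 'a" where f: "f \<in> SD" "f \<notin> Aut" by blast
    have sd: "SD_map f" and s: "surj f" using f(1) by (auto simp: SD_def)
    from sd_core[OF sd two] show "card (UNIV :: 'a set) = 5"
    proof
      assume "\<forall>x y. f (x + y) = f x + f y"
      hence "field_aut f" using SD_aut[OF sd s two] by blast
      thus ?thesis using f(2) by (simp add: Aut_def)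
    next
      assume "(5::'a) = 0 \<and> (\<forall>x::'a. x \<in> {0, 1, -1, 2, -2})"
      thus ?thesis using card5_of by blast
    qed
  qed
  show "card (UNIV :: 'a set) = 5 \<longleftrightarrow> (\<exists>i::'a. i ^ 2 = -1 \<and> generates_units i)"
    using part4_fwd[OF two] part4_bwd by blast
  assume fin: "finite (UNIV :: 'a set)"
  show "card (UNIV :: 'a set) = 5 \<longleftrightarrow> SD_map (\<lambda>w::'a. if is_square w then w else - w)"
  proof
    assume c: "card (UNIV :: 'a set) = 5"
    have five: "(5::'a) = 0" and all: "\<forall>x::'a. x \<in> {0, 1, -1, 2, -2}" using card5_imp[OF c] by auto
    show "SD_map (\<lambda>w::'a. if is_square w then w else - w)"
      using f5_SD[OF five all] f5_sq_map[OF five all] by simp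
  next
    assume "SD_map (\<lambda>w::'a. if is_square w then w else - w)"
    thus "card (UNIV :: 'a set) = 5" using part3_fwd[OF fin two] by blast
  qed
qed

end
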